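(* Let $G$ be a profinite group whose set of coprime commutators has cardinality less than $2^{\aleph_0}$. Let $x\in G$ and let $H$ be a (closed) subgroup of $G$ such that $\pi(x)\cap\pi(H)=\emptyset$. Then the centralizer $C_H(x)$ has finite index in $H$.
   Context: For an element $x$ of a profinite group, $\pi(x)$ denotes the set of primes dividing the order of the procyclic subgroup $\overline{\langle x\rangle}$; for a profinite group $H$, $\pi(H)$ is the set of primes dividing its order (a Steinitz number). A coprime commutator in a profinite group $G$ is an element $[x,y]$ with $x,y\in G$ and $\pi(x)\cap\pi(y)=\emptyset$. *)

theory Defs
  imports "HOL-Analysis.Analysis" "HOL-Algebra.Algebra" "HOL-Library.Equipollence"
begin

definition topological_group :: "('a, 'b) monoid_scheme \<Rightarrow> 'a topology \<Rightarrow> bool" where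
  "topological_group G T \<longleftrightarrow> group G \<and> topspace T = carrier G
     \<and> continuous_map (prod_topology T T) T (\<lambda>(x, y). x \<otimes>\<^bsub>G\<^esub> y)
     \<and> continuous_map T T (\<lambda>x. inv\<^bsub>G\<^esub> x)"

definition totally_disconnected_space :: "'a topology \<Rightarrow> bool" where
  "totally_disconnected_space T \<longleftrightarrow>
     (\<forall>x\<in>topspace T. connected_component_of_set T x = {x})"

definition profinite_group :: "('a, 'b) monoid_scheme \<Rightarrow> 'a topology \<Rightarrow> bool" where
  "profinite_group G T \<longleftrightarrow> topological_group G T \<and> compact_space T
     \<and> Hausdorff_space T \<and> totally_disconnected_space T"

text \<open>The set of primes dividing the (Steinitz) order of a closed subgroup H of G:
  the order of H is the lcm of the finite indices |H : H \<inter> U|, U ranging over the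
  open normal subgroups of G.\<close>
definition prime_set :: "('a, 'b) monoid_scheme \<Rightarrow> 'a topology \<Rightarrow> 'a set \<Rightarrow> nat set" where
  "prime_set G T H = {p. Factorial_Ring.prime p \<and> (\<exists>U. openin T U \<and> U \<lhd> G \<and>
       p dvd card ((\<lambda>h. (H \<inter> U) #>\<^bsub>G\<^esub> h) ` H))}"

definition prime_set_elem :: "('a, 'b) monoid_scheme \<Rightarrow> 'a topology \<Rightarrow> 'a \<Rightarrow> nat set" where
  "prime_set_elem G T x = prime_set G T (T closure_of (generate G {x}))"

definition commutator :: "('a, 'b) monoid_scheme \<Rightarrow> 'a \<Rightarrow> 'a \<Rightarrow> 'a" where
  "commutator G x y = inv\<^bsub>G\<^esub> x \<otimes>\<^bsub>G\<^esub> inv\<^bsub>G\<^esub> y \<otimes>\<^bsub>G\<^esub> x \<otimes>\<^bsub>G\<^esub> y"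

definition coprime_commutators :: "('a, 'b) monoid_scheme \<Rightarrow> 'a topology \<Rightarrow> 'a set" where
  "coprime_commutators G T = {commutator G x y | x y. x \<in> carrier G \<and> y \<in> carrier G \<and>
       prime_set_elem G T x \<inter> prime_set_elem G T y = {}}"

definition centralizer_in :: "('a, 'b) monoid_scheme \<Rightarrow> 'a set \<Rightarrow> 'a \<Rightarrow> 'a set" where
  "centralizer_in G H x = {h \<in> H. h \<otimes>\<^bsub>G\<^esub> x = x \<otimes>\<^bsub>G\<^esub> h}"

end

theory Submission imports Defs begin

lemma tg_cont_mult:
  assumes "topological_group G T" "continuous_map Z T f" "continuous_map Z T g"
  shows "continuous_map Z T (\<lambda>y. f y \<otimes>\<^bsub>G\<^esub> g y)"
proof -
  from assms(1) have m: "continuous_map (prod_topology T T) T (\<lambda>(x,y). x \<otimes>\<^bsub>G\<^esub> y)"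
    by (simp add: topological_group_def)
  have "continuous_map Z T ((\<lambda>(x,y). x \<otimes>\<^bsub>G\<^esub> y) \<circ> (\<lambda>y. (f y, g y)))"
    by (rule continuous_map_compose[OF continuous_map_pairedI[OF assms(2,3)] m])
  thus ?thesis by (simp add: o_def)
qed

lemma tg_cont_inv:
  assumes "topological_group G T" "continuous_map Z T f"
  shows "continuous_map Z T (\<lambda>y. inv\<^bsub>G\<^esub> f y)"
proof -
  from assms(1) have m: "continuous_map T T (\<lambda>x. inv\<^bsub>G\<^esub> x)"
    by (simp add: topological_group_def)
  show ?thesis using continuous_map_compose[OF assms(2) m] by (simp add: o_def)
qed

lemma (in group) closure_subgroup:
  assumes tg: "topological_group G T" and A: "subgroup A G"
  shows "subgroup (T closure_of A) G"
proof -
  have top: "topspace T = carrier G" using tg by (simp add: topological_group_def)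
  have m: "continuous_map (prod_topology T T) T (\<lambda>(x,y). x \<otimes> y)"
    and i: "continuous_map T T (\<lambda>x. inv x)" using tg by (simp_all add: topological_group_def)
  have As: "A \<subseteq> topspace T" using A top subgroup.subset by blast
  show ?thesis
  proof (rule subgroupI)
    show "T closure_of A \<subseteq> carrier G" using top closure_of_subset_topspace by metis
    show "T closure_of A \<noteq> {}" using closure_of_subset[OF As] subgroup.one_closed[OF A] by auto
  next
    fix a assume a: "a \<in> T closure_of A"
    have "(\<lambda>x. inv x) ` (T closure_of A) \<subseteq> T closure_of ((\<lambda>x. inv x) ` A)"
      by (rule continuous_map_image_closure_subset[OF i])
    also have "\<dots> \<subseteq> T closure_of A"
      by (rule closure_of_mono) (auto intro: subgroup.m_inv_closed[OF A])
    finally show "inv a \<in> T closure_of A" using a by blast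
  next
    fix a b assume a: "a \<in> T closure_of A" and b: "b \<in> T closure_of A"
    have "(a,b) \<in> prod_topology T T closure_of (A \<times> A)"
      using a b by (simp add: closure_of_Times)
    moreover have "(\<lambda>(x,y). x \<otimes> y) ` (prod_topology T T closure_of (A \<times> A))
        \<subseteq> T closure_of ((\<lambda>(x,y). x \<otimes> y) ` (A \<times> A))"
      by (rule continuous_map_image_closure_subset[OF m])
    moreover have "T closure_of ((\<lambda>(x,y). x \<otimes> y) ` (A \<times> A)) \<subseteq> T closure_of A"
      by (rule closure_of_mono) (auto intro: subgroup.m_closed[OF A])
    ultimately show "a \<otimes> b \<in> T closure_of A" by blast
  qed
qed

lemma card_image_eqrel:
  assumes "\<And>a b. a \<in> A \<Longrightarrow> b \<in> A \<Longrightarrow> f a = f b \<longleftrightarrow> g a = g b"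
  shows "card (f ` A) = card (g ` A)"
proof -
  have "bij_betw (\<lambda>y. f (inv_into A g y)) (g ` A) (f ` A)"
  proof (rule bij_betw_imageI)
    show "inj_on (\<lambda>y. f (inv_into A g y)) (g ` A)"
      by (rule inj_onI) (metis assms f_inv_into_f inv_into_into)
    show "(\<lambda>y. f (inv_into A g y)) ` g ` A = f ` A"
    proof
      show "(\<lambda>y. f (inv_into A g y)) ` g ` A \<subseteq> f ` A" by (auto intro: inv_into_into)
      show "f ` A \<subseteq> (\<lambda>y. f (inv_into A g y)) ` g ` A"
      proof
        fix y assume "y \<in> f ` A" then obtain a where a: "a \<in> A" "y = f a" by blast
        have "f (inv_into A g (g a)) = f a"
          using assms[of "inv_into A g (g a)" a] a by (metis f_inv_into_f image_eqI inv_into_into)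
        thus "y \<in> (\<lambda>y. f (inv_into A g y)) ` g ` A" using a by (intro image_eqI[where x="g a"]) auto
      qed
    qed
  qed
  thus ?thesis by (metis bij_betw_same_card)
qed

lemma (in group) rcos_eq_iff:
  assumes "subgroup M G" "a \<in> carrier G" "b \<in> carrier G"
  shows "(M #> a = M #> b) \<longleftrightarrow> a \<otimes> inv b \<in> M"
proof -
  show ?thesis
  proof
    assume e: "M #> a = M #> b"
    have "a \<in> M #> b" using rcos_self[OF assms(2,1)] e by simp
    thus "a \<otimes> inv b \<in> M" using subgroup.rcos_module_imp[OF assms(1) is_group assms(3)] by blast
  next
    assume "a \<otimes> inv b \<in> M"
    hence "a \<in> M #> b" using subgroup.rcos_module_rev[OF assms(1) is_group assms(3) assms(2)] by blast
    thus "M #> a = M #> b" using repr_independence[OF _ assms(3,1)] by simp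
  qed
qed


lemma r_coset_carrier_upd: "r_coset (G\<lparr>carrier := H\<rparr>) A a = r_coset G A a"
  by (simp add: r_coset_def)

lemma (in group) index_dvd:
  assumes H: "subgroup H G" and K: "subgroup K G" and KH: "K \<subseteq> H" and U: "U \<lhd> G"
  shows "card ((\<lambda>k. (K \<inter> U) #> k) ` K) dvd card ((\<lambda>h. (H \<inter> U) #> h) ` H)"
proof (cases "finite ((\<lambda>h. (H \<inter> U) #> h) ` H)")
  case False thus ?thesis by simp
next
  case fin: True
  define G' where "G' = G\<lparr>carrier := H\<rparr>"
  have gG': "group G'" unfolding G'_def using subgroup.subgroup_is_group[OF H is_group] .
  have nN: "(U \<inter> H) \<lhd> G'" unfolding G'_def by (rule normal_Int_subgroup[OF H U])
  interpret N: normal "U \<inter> H" G' by (rule nN)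
  define Q where "Q = G' Mod (U \<inter> H)"
  have gQ: "group Q" unfolding Q_def by (rule N.factorgroup_is_group)
  have hom: "(\<lambda>a. (U \<inter> H) #>\<^bsub>G'\<^esub> a) \<in> hom G' Q" unfolding Q_def by (rule N.r_coset_hom_Mod)
  have gh: "group_hom G' Q (\<lambda>a. (U \<inter> H) #>\<^bsub>G'\<^esub> a)"
    using gG' gQ hom by (simp add: group_hom_def group_hom_axioms_def)
  have KG': "subgroup K G'" unfolding G'_def by (rule subgroup_incl[OF K H KH])
  have sub: "subgroup ((\<lambda>a. (U \<inter> H) #>\<^bsub>G'\<^esub> a) ` K) Q"
    by (rule group_hom.subgroup_img_is_subgroup[OF gh KG'])
  have cQ: "carrier Q = (\<lambda>h. (H \<inter> U) #> h) ` H"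
    unfolding Q_def G'_def by (simp add: carrier_FactGroup r_coset_carrier_upd Int_commute)
  have finQ: "finite (carrier Q)" using cQ fin by simp
  have "card (rcosets\<^bsub>Q\<^esub> ((\<lambda>a. (U \<inter> H) #>\<^bsub>G'\<^esub> a) ` K)) * card ((\<lambda>a. (U \<inter> H) #>\<^bsub>G'\<^esub> a) ` K) = order Q"
    by (rule group.lagrange[OF gQ sub])
  hence d1: "card ((\<lambda>a. (U \<inter> H) #>\<^bsub>G'\<^esub> a) ` K) dvd card (carrier Q)"
    unfolding order_def by (metis dvd_triv_right)
  have eq: "card ((\<lambda>a. (U \<inter> H) #>\<^bsub>G'\<^esub> a) ` K) = card ((\<lambda>k. (K \<inter> U) #> k) ` K)"
  proof (rule card_image_eqrel)
    fix a b assume a: "a \<in> K" and b: "b \<in> K"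
    have ac: "a \<in> carrier G" and bc: "b \<in> carrier G" using a b K subgroup.subset by blast+
    have ab: "a \<otimes> inv b \<in> K" using a b K by (simp add: subgroup.m_closed subgroup.m_inv_closed)
    have s1: "subgroup (U \<inter> H) G" using subgroups_Inter_pair[OF normal_imp_subgroup[OF U] H] .
    have s2: "subgroup (K \<inter> U) G" using subgroups_Inter_pair[OF K normal_imp_subgroup[OF U]] .
    have "((U \<inter> H) #>\<^bsub>G'\<^esub> a = (U \<inter> H) #>\<^bsub>G'\<^esub> b) \<longleftrightarrow> ((U \<inter> H) #> a = (U \<inter> H) #> b)"
      unfolding G'_def by (simp add: r_coset_carrier_upd)
    also have "\<dots> \<longleftrightarrow> a \<otimes> inv b \<in> U \<inter> H" by (rule rcos_eq_iff[OF s1 ac bc])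
    also have "\<dots> \<longleftrightarrow> a \<otimes> inv b \<in> K \<inter> U" using ab KH by blast
    also have "\<dots> \<longleftrightarrow> ((K \<inter> U) #> a = (K \<inter> U) #> b)" by (rule rcos_eq_iff[OF s2 ac bc, symmetric])
    finally show "((U \<inter> H) #>\<^bsub>G'\<^esub> a = (U \<inter> H) #>\<^bsub>G'\<^esub> b) \<longleftrightarrow> ((K \<inter> U) #> a = (K \<inter> U) #> b)" .
  qed
  show ?thesis using d1 eq cQ by simp
qed

lemma (in group) pi_mono:
  assumes tg: "topological_group G T" and H: "subgroup H G" and cH: "closedin T H" and h: "h \<in> H"
  shows "prime_set_elem G T h \<subseteq> prime_set G T H"
proof -
  have hc: "h \<in> carrier G" using H h subgroup.subset by blast
  define K where "K = T closure_of (generate G {h})"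
  have gs: "subgroup (generate G {h}) G" using generate_is_subgroup hc by simp
  have K: "subgroup K G" unfolding K_def by (rule closure_subgroup[OF tg gs])
  have "generate G {h} \<subseteq> H" using generate_subgroup_incl[OF _ H] h by simp
  hence KH: "K \<subseteq> H" unfolding K_def using closure_of_minimal cH by blast
  show ?thesis
  proof
    fix p assume "p \<in> prime_set_elem G T h"
    then obtain U where p: "Factorial_Ring.prime p" and U: "openin T U" "U \<lhd> G"
      and d: "p dvd card ((\<lambda>k. (K \<inter> U) #> k) ` K)"
      unfolding prime_set_elem_def prime_set_def K_def by blast
    have "p dvd card ((\<lambda>k. (H \<inter> U) #> k) ` H)"
      using dvd_trans[OF d index_dvd[OF H K KH U(2)]] .
    thus "p \<in> prime_set G T H" unfolding prime_set_def using p U by blast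
  qed
qed


lemma (in group) main_core:
  assumes pg: "profinite_group G T" and cc: "coprime_commutators G T \<prec> (UNIV :: real set)"
    and x: "x \<in> carrier G" and H: "subgroup H G" and cH: "closedin T H"
    and disj: "prime_set_elem G T x \<inter> prime_set G T H = {}"
  shows "finite ((\<lambda>h. centralizer_in G H x #> h) ` H)"
proof -
  have tg: "topological_group G T" using pg by (simp add: profinite_group_def)
  have top: "topspace T = carrier G" using tg by (simp add: topological_group_def)
  have cs: "compact_space T" and hs: "Hausdorff_space T" using pg by (simp_all add: profinite_group_def)
  have Hc: "\<And>h. h \<in> H \<Longrightarrow> h \<in> carrier G" using H subgroup.subset by blast
  define g where "g = (\<lambda>h. inv h \<otimes> x \<otimes> h)"
  have gc: "\<And>k. k \<in> carrier G \<Longrightarrow> g k \<in> carrier G" using x by (simp add: g_def)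
  have gl: "\<And>k b. k \<in> carrier G \<Longrightarrow> b \<in> carrier G \<Longrightarrow> g (k \<otimes> b) = inv b \<otimes> g k \<otimes> b"
    using x by (simp add: g_def inv_mult_group m_assoc)
  have g1: "g \<one> = x" using x by (simp add: g_def)
  have cg: "\<And>c. c \<in> carrier G \<Longrightarrow> c \<otimes> g c = x \<otimes> c"
    using x by (simp add: g_def m_assoc[symmetric])
  have Cfact: "\<And>c. c \<in> carrier G \<Longrightarrow> (c \<otimes> x = x \<otimes> c) \<longleftrightarrow> g c = x"
  proof -
    fix c assume c: "c \<in> carrier G"
    have "g c = x \<longleftrightarrow> c \<otimes> g c = c \<otimes> x" using l_cancel[of c "g c" x] c gc[OF c] x by blast
    also have "\<dots> \<longleftrightarrow> x \<otimes> c = c \<otimes> x" by (simp only: cg[OF c])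
    finally show "(c \<otimes> x = x \<otimes> c) \<longleftrightarrow> g c = x" by (metis)
  qed
  define C where "C = centralizer_in G H x"
  have Cg: "C = {c \<in> H. g c = x}" unfolding C_def centralizer_in_def using Cfact Hc by blast
  have ginv: "\<And>a. a \<in> carrier G \<Longrightarrow> g a = x \<Longrightarrow> g (inv a) = x"
  proof -
    fix a assume a: "a \<in> carrier G" and ga: "g a = x"
    have "g (inv a) = a \<otimes> x \<otimes> inv a" using a by (simp add: g_def)
    also have "\<dots> = a \<otimes> g a \<otimes> inv a" using ga by simp
    also have "\<dots> = g (a \<otimes> inv a)" using gl[of a "inv a"] a by simp
    also have "\<dots> = x" using a g1 by simp
    finally show "g (inv a) = x" .
  qed
  have Csub: "subgroup C G"
  proof (rule subgroupI)
    show "C \<subseteq> carrier G" using Cg Hc by blast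
    show "C \<noteq> {}" using Cg g1 subgroup.one_closed[OF H] by blast
  next
    fix a assume "a \<in> C" thus "inv a \<in> C" using Cg ginv Hc subgroup.m_inv_closed[OF H] by blast
  next
    fix a b assume a: "a \<in> C" and b: "b \<in> C"
    have "g (a \<otimes> b) = inv b \<otimes> g a \<otimes> b" using gl a b Cg Hc by blast
    also have "\<dots> = g b" using a Cg by (simp add: g_def)
    also have "\<dots> = x" using b Cg by simp
    finally show "a \<otimes> b \<in> C" using a b Cg subgroup.m_closed[OF H] by blast
  qed
  define S where "S = g ` H"
  have key: "\<And>h h'. h \<in> H \<Longrightarrow> h' \<in> H \<Longrightarrow> g h = g h' \<Longrightarrow> C #> h = C #> h'"
  proof -
    fix h h' assume h: "h \<in> H" and h': "h' \<in> H" and e: "g h = g h'"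
    have hc: "h \<in> carrier G" and hc': "h' \<in> carrier G" using h h' Hc by auto
    have "g (h \<otimes> inv h') = h' \<otimes> g h \<otimes> inv h'" using gl[of h "inv h'"] hc hc' by simp
    also have "\<dots> = h' \<otimes> g h' \<otimes> inv h'" using e by simp
    also have "\<dots> = g (h' \<otimes> inv h')" using gl[of h' "inv h'"] hc' by simp
    also have "\<dots> = x" using hc' g1 by simp
    finally have "h \<otimes> inv h' \<in> C" using Cg h h' H by (simp add: subgroup.m_closed subgroup.m_inv_closed)
    thus "C #> h = C #> h'" using rcos_eq_iff[OF Csub hc hc'] by simp
  qed
  have fin_cos: "finite S \<Longrightarrow> finite ((\<lambda>h. C #> h) ` H)"
  proof -
    assume fS: "finite S"
    have "(\<lambda>h. C #> h) ` H = (\<lambda>s. C #> inv_into H g s) ` S"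
    proof
      show "(\<lambda>h. C #> h) ` H \<subseteq> (\<lambda>s. C #> inv_into H g s) ` S"
      proof
        fix y assume "y \<in> (\<lambda>h. C #> h) ` H"
        then obtain h where h: "h \<in> H" "y = C #> h" by blast
        have e: "C #> inv_into H g (g h) = C #> h"
          using key[of "inv_into H g (g h)" h] h by (simp add: inv_into_into f_inv_into_f)
        have gS: "g h \<in> S" using h(1) S_def by blast
        show "y \<in> (\<lambda>s. C #> inv_into H g s) ` S"
          by (rule image_eqI[OF _ gS]) (use h e in simp)
      qed
      show "(\<lambda>s. C #> inv_into H g s) ` S \<subseteq> (\<lambda>h. C #> h) ` H"
        unfolding S_def by (auto intro: inv_into_into)
    qed
    thus ?thesis using fS by simp
  qed
  show ?thesis
  proof (rule ccontr)
    assume nf: "\<not> ?thesis"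
    hence infS: "infinite S" using fin_cos unfolding C_def by blast
    have lep1: "lepoll S (coprime_commutators G T)"
      unfolding lepoll_def
    proof (intro exI conjI)
      show "inj_on (\<lambda>s. inv x \<otimes> s) S"
        by (rule inj_onI) (use x gc Hc in \<open>auto simp: S_def\<close>)
      show "(\<lambda>s. inv x \<otimes> s) ` S \<subseteq> coprime_commutators G T"
      proof
        fix y assume "y \<in> (\<lambda>s. inv x \<otimes> s) ` S"
        then obtain h where h: "h \<in> H" "y = inv x \<otimes> g h" unfolding S_def by blast
        have hc: "h \<in> carrier G" using h Hc by auto
        have "y = commutator G x h" using h hc x by (simp add: commutator_def g_def m_assoc)
        moreover have "prime_set_elem G T x \<inter> prime_set_elem G T h = {}"
          using disj pi_mono[OF tg H cH h(1)] by blast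
        ultimately show "y \<in> coprime_commutators G T"
          unfolding coprime_commutators_def using hc x by blast
      qed
    qed
    have cid: "continuous_map T T (\<lambda>y. y)" using continuous_map_id by (simp add: id_def)
    have cconst: "\<And>a. a \<in> carrier G \<Longrightarrow> continuous_map T T (\<lambda>y. a)" using top by simp
    have gcont: "continuous_map T T g" unfolding g_def
      by (intro tg_cont_mult[OF tg] tg_cont_inv[OF tg] cid cconst x)
    have conjcont: "\<And>a. a \<in> carrier G \<Longrightarrow> continuous_map T T (\<lambda>y. a \<otimes> y \<otimes> inv a)"
      by (intro tg_cont_mult[OF tg] cid cconst) simp_all
    have cpH: "compactin T H" by (rule closedin_compact_space[OF cs cH])
    have cpS: "compactin T S" unfolding S_def by (rule image_compactin[OF cpH gcont])
    have clS: "closedin T S" by (rule compactin_imp_closedin[OF hs cpS])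
    have perfect: "T derived_set_of S = S"
    proof
      show "T derived_set_of S \<subseteq> S"
      proof -
        have "T closure_of S = S" using clS by (simp add: closure_of_eq)
        thus ?thesis using derived_set_of_subset_closure_of[of T S] by simp
      qed
      show "S \<subseteq> T derived_set_of S"
      proof (rule ccontr)
        assume "\<not> S \<subseteq> T derived_set_of S"
        then obtain s0 where s0: "s0 \<in> S" "s0 \<notin> T derived_set_of S" by blast
        have "s0 \<in> topspace T" using s0 S_def gc Hc top by auto
        hence "\<exists>V. s0 \<in> V \<and> openin T V \<and> \<not> (\<exists>y. y \<noteq> s0 \<and> y \<in> S \<and> y \<in> V)"
          using s0(2) unfolding derived_set_of_def by blast
        then obtain V where V: "s0 \<in> V" "openin T V" and VS0: "\<not> (\<exists>y. y \<noteq> s0 \<and> y \<in> S \<and> y \<in> V)"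
          by blast
        have VS: "\<And>y. y \<in> S \<Longrightarrow> y \<in> V \<Longrightarrow> y = s0" using VS0 by blast
        obtain h0 where h0: "h0 \<in> H" "s0 = g h0" using s0 S_def by blast
        have h0c: "h0 \<in> carrier G" using h0 Hc by auto
        define W where "W = (\<lambda>h. {y \<in> topspace T. (inv h0 \<otimes> h) \<otimes> y \<otimes> inv (inv h0 \<otimes> h) \<in> V})"
        have Wopen: "\<And>h. h \<in> H \<Longrightarrow> openin T (W h)"
          unfolding W_def using conjcont Hc h0c V(2)
          by (intro openin_continuous_map_preimage) auto
        have Win: "\<And>h. h \<in> H \<Longrightarrow> g h \<in> W h"
        proof -
          fix h assume h: "h \<in> H"
          have hc: "h \<in> carrier G" using h Hc by auto
          define a where "a = inv h0 \<otimes> h"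
          have ac: "a \<in> carrier G" using hc h0c a_def by simp
          have "h \<otimes> inv a = h0" using hc h0c by (simp add: a_def inv_mult_group m_assoc[symmetric])
          hence "a \<otimes> g h \<otimes> inv a = s0" using gl[of h "inv a"] hc ac h0 by simp
          thus "g h \<in> W h" unfolding W_def using V(1) a_def gc hc top by simp
        qed
        have WS: "\<And>h. h \<in> H \<Longrightarrow> W h \<inter> S \<subseteq> {g h}"
        proof
          fix h y assume h: "h \<in> H" and y: "y \<in> W h \<inter> S"
          have hc: "h \<in> carrier G" using h Hc by auto
          define a where "a = inv h0 \<otimes> h"
          have ac: "a \<in> carrier G" using hc h0c a_def by simp
          have aH: "a \<in> H" using h h0 H a_def by (simp add: subgroup.m_closed subgroup.m_inv_closed)
          obtain k where k: "k \<in> H" "y = g k" using y S_def by blast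
          have kc: "k \<in> carrier G" using k Hc by auto
          have e1: "a \<otimes> g k \<otimes> inv a = g (k \<otimes> inv a)" using gl[of k "inv a"] kc ac by simp
          have "k \<otimes> inv a \<in> H" using k aH H by (simp add: subgroup.m_closed subgroup.m_inv_closed)
          hence "g (k \<otimes> inv a) \<in> S" unfolding S_def by blast
          moreover have "g (k \<otimes> inv a) \<in> V" using y k e1 unfolding W_def a_def by simp
          ultimately have e2: "g (k \<otimes> inv a) = g h0" using VS h0 by blast
          have "g k = g (k \<otimes> inv a \<otimes> a)" using kc ac by (simp add: m_assoc)
          also have "\<dots> = inv a \<otimes> g (k \<otimes> inv a) \<otimes> a" using gl kc ac by simp
          also have "\<dots> = inv a \<otimes> g h0 \<otimes> a" using e2 by simp
          also have "\<dots> = g (h0 \<otimes> a)" using gl h0c ac by simp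
          also have "h0 \<otimes> a = h" using hc h0c by (simp add: a_def m_assoc[symmetric])
          finally show "y \<in> {g h}" using k by simp
        qed
        have "\<exists>F. finite F \<and> F \<subseteq> W ` H \<and> S \<subseteq> \<Union>F"
        proof -
          have allopen: "\<forall>B\<in>W ` H. openin T B" using Wopen by blast
          have cov: "S \<subseteq> \<Union>(W ` H)" using Win unfolding S_def by blast
          show ?thesis using conjunct2[OF cpS[unfolded compactin_def], rule_format, of "W ` H"] allopen cov
            by blast
        qed
        then obtain F where F: "finite F" "F \<subseteq> W ` H" "S \<subseteq> \<Union>F" by blast
        have "S = (\<Union>B\<in>F. B \<inter> S)" using F(3) by blast
        moreover have "\<And>B. B \<in> F \<Longrightarrow> finite (B \<inter> S)"
        proof -
          fix B assume "B \<in> F"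
          then obtain h where h: "h \<in> H" "B = W h" using F(2) by blast
          show "finite (B \<inter> S)" using WS[OF h(1)] h(2) finite_subset by blast
        qed
        ultimately have "finite S" using F(1) by (metis finite_UN_I)
        thus False using infS by simp
      qed
    qed
    have Sne: "S \<noteq> {}" using S_def subgroup.one_closed[OF H] by blast
    have lc: "locally_compact_space T" by (rule compact_imp_locally_compact_space[OF cs])
    have "lepoll (UNIV :: real set) S" using lepoll_perfect_set[of T S] lc hs perfect Sne by blast
    hence "lesspoll (UNIV :: real set) (UNIV :: real set)"
      using lesspoll_trans1 lepoll_trans[OF _ lep1] cc by blast
    thus False by simp
  qed
qed

theorem lemma2p2:
  fixes G :: "('a, 'b) monoid_scheme" and T :: "'a topology" and H :: "'a set" and x :: 'a
  assumes "profinite_group G T"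
    and "coprime_commutators G T \<prec> (UNIV :: real set)"
    and "x \<in> carrier G"
    and "subgroup H G" and "closedin T H"
    and "prime_set_elem G T x \<inter> prime_set G T H = {}"
  shows "finite ((\<lambda>h. centralizer_in G H x #>\<^bsub>G\<^esub> h) ` H)"
proof -
  interpret group G using assms(1) by (simp add: profinite_group_def topological_group_def)
  show ?thesis by (rule main_core[OF assms])
qed

end
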